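(* If $Q$ is a quantity space over a field $K$, then $Q$ is distributive: for all dimensions $\mathsf{A},\mathsf{B}\in Q/{\sim}$, all $x,y\in\mathsf{A}$ and all $z\in\mathsf{B}$ we have $(x+y)z=xz+yz$ and $z(x+y)=zx+zy$.
   Context: A scalable monoid over a (unital, associative) ring $R$ is a monoid $X$ (identity $1_X$, product written $xy$) together with a map $R\times X\to X$, $(\alpha,x)\mapsto\alpha\cdot x$, such that $1\cdot x=x$, $\alpha\cdot(\beta\cdot x)=\alpha\beta\cdot x$ and $\alpha\cdot(xy)=(\alpha\cdot x)y=x(\alpha\cdot y)$. A quantity space over a field $K$ is a commutative scalable monoid $Q$ over $K$ for which there exists a basis, i.e. a finite set $\{e_1,\ldots,e_n\}$ of invertible elements of $Q$ such that every $x\in Q$ has a unique expansion $x=\mu\cdot\prod_{i=1}^n e_i^{k_i}$ with $\mu\in K$ and $k_i\in\mathbb{Z}$. On $Q$, $x\sim y$ iff $\alpha\cdot x=\beta\cdot y$ for some $\alpha,\beta\in K$; classes are dimensions. A unit element for a class $\mathsf{C}$ is some $u\in\mathsf{C}$ such that every $x\in\mathsf{C}$ equals $\lambda\cdot u$ for some $\lambda\in K$ and $\lambda\cdot u=\lambda'\cdot u$ implies $\lambda=\lambda'$. If $u$ is a unit element for $\mathsf{C}$ and $x=\rho\cdot u$, $y=\sigma\cdot u$, then $x+y:=(\rho+\sigma)\cdot u$ (independent of the choice of $u$); every dimension of a quantity space has a unit element, so this sum is defined for any two elements of the same dimension. *)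

theory Defs
  imports Main
begin

text \<open>The monoid X is modelled as a type of class comm_monoid_mult (carrier = whole type);
  the scalar action R x X -> X is the parameter s.\<close>

definition scalable_monoid :: "('k::ring_1 \<Rightarrow> 'q::monoid_mult \<Rightarrow> 'q) \<Rightarrow> bool" where
  "scalable_monoid s \<longleftrightarrow>
     (\<forall>x. s 1 x = x) \<and>
     (\<forall>a b x. s a (s b x) = s (a * b) x) \<and>
     (\<forall>a x y. s a (x * y) = s a x * y \<and> s a (x * y) = x * s a y)"

definition invertible :: "'q::monoid_mult \<Rightarrow> bool" where
  "invertible e \<longleftrightarrow> (\<exists>y. e * y = 1 \<and> y * e = 1)"

definition minv :: "'q::monoid_mult \<Rightarrow> 'q" where
  "minv e = (THE y. e * y = 1 \<and> y * e = 1)"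

definition zpow :: "'q::monoid_mult \<Rightarrow> int \<Rightarrow> 'q" where
  "zpow e k = (if 0 \<le> k then e ^ nat k else (minv e) ^ nat (- k))"

definition is_basis :: "('k::field \<Rightarrow> 'q::comm_monoid_mult \<Rightarrow> 'q) \<Rightarrow> 'q set \<Rightarrow> bool" where
  "is_basis s E \<longleftrightarrow> finite E \<and> (\<forall>e\<in>E. invertible e) \<and>
     (\<forall>x. \<exists>!(\<mu>, k). (\<forall>e. e \<notin> E \<longrightarrow> k e = (0::int)) \<and> x = s \<mu> (\<Prod>e\<in>E. zpow e (k e)))"

definition quantity_space :: "('k::field \<Rightarrow> 'q::comm_monoid_mult \<Rightarrow> 'q) \<Rightarrow> bool" where
  "quantity_space s \<longleftrightarrow> scalable_monoid s \<and> (\<exists>E. is_basis s E)"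

definition qsim :: "('k \<Rightarrow> 'q \<Rightarrow> 'q) \<Rightarrow> 'q \<Rightarrow> 'q \<Rightarrow> bool" where
  "qsim s x y \<longleftrightarrow> (\<exists>\<alpha> \<beta>. s \<alpha> x = s \<beta> y)"

definition dims :: "('k \<Rightarrow> 'q \<Rightarrow> 'q) \<Rightarrow> 'q set set" where
  "dims s = UNIV // {(x, y). qsim s x y}"

definition dim_of :: "('k \<Rightarrow> 'q \<Rightarrow> 'q) \<Rightarrow> 'q \<Rightarrow> 'q set" where
  "dim_of s x = {y. qsim s x y}"

definition unit_element :: "('k \<Rightarrow> 'q \<Rightarrow> 'q) \<Rightarrow> 'q set \<Rightarrow> 'q \<Rightarrow> bool" where
  "unit_element s C u \<longleftrightarrow> u \<in> C \<and> (\<forall>x\<in>C. \<exists>m. x = s m u) \<and>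
     (\<forall>m m'. s m u = s m' u \<longrightarrow> m = m')"

definition qsum :: "('k::field \<Rightarrow> 'q \<Rightarrow> 'q) \<Rightarrow> 'q \<Rightarrow> 'q \<Rightarrow> 'q" where
  "qsum s x y = (let u = (SOME u. unit_element s (dim_of s x) u)
                 in s ((THE \<rho>. x = s \<rho> u) + (THE \<sigma>. y = s \<sigma> u)) u)"

end

theory Submission
  imports Defs
begin

lemma scal:
  assumes "scalable_monoid s"
  shows "s 1 x = x" "s a (s b x) = s (a*b) x" "s a x * y = s a (x*y)" "x * s a y = s a (x*y)"
  using assms unfolding scalable_monoid_def by metis+

lemma basis_uniq:
  assumes "is_basis s E"
    and "\<forall>e. e \<notin> E \<longrightarrow> k1 e = 0" and "\<forall>e. e \<notin> E \<longrightarrow> k2 e = 0"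
    and "s m1 (\<Prod>e\<in>E. zpow e (k1 e)) = s m2 (\<Prod>e\<in>E. zpow e (k2 e))"
  shows "m1 = m2 \<and> k1 = k2"
proof -
  let ?P = "\<lambda>(\<mu>, k). (\<forall>e. e \<notin> E \<longrightarrow> k e = (0::int)) \<and>
      s m1 (\<Prod>e\<in>E. zpow e (k1 e)) = s \<mu> (\<Prod>e\<in>E. zpow e (k e))"
  have "\<exists>!p. ?P p" using assms(1) unfolding is_basis_def by blast
  then obtain p where p: "\<forall>q. ?P q \<longrightarrow> q = p" by blast
  have h1: "?P (m1, k1)" and h2: "?P (m2, k2)" using assms by auto
  have "(m1, k1) = p" by (rule p[rule_format, OF h1])
  moreover have "(m2, k2) = p" by (rule p[rule_format, OF h2])
  ultimately have "(m1, k1) = (m2, k2)" by simp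
  then show ?thesis by simp
qed

lemma basis_ex:
  assumes "is_basis s E"
  shows "\<exists>\<mu> k. (\<forall>e. e \<notin> E \<longrightarrow> k e = (0::int)) \<and> x = s \<mu> (\<Prod>e\<in>E. zpow e (k e))"
proof -
  have "\<exists>!(\<mu>, k). (\<forall>e. e \<notin> E \<longrightarrow> k e = (0::int)) \<and> x = s \<mu> (\<Prod>e\<in>E. zpow e (k e))"
    using assms unfolding is_basis_def by blast
  then obtain p where "case p of (\<mu>, k) \<Rightarrow> (\<forall>e. e \<notin> E \<longrightarrow> k e = (0::int)) \<and> x = s \<mu> (\<Prod>e\<in>E. zpow e (k e))"
    by (meson ex1_implies_ex)
  then show ?thesis by (cases p) auto
qed

lemma unit_ex:
  assumes "quantity_space s"
  shows "\<exists>u. unit_element s (dim_of s x) u"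
proof -
  obtain E where E: "is_basis s E" using assms unfolding quantity_space_def by blast
  have sm: "scalable_monoid s" using assms unfolding quantity_space_def by blast
  define B where "B k = (\<Prod>e\<in>E. zpow e (k e))" for k
  obtain \<mu> k where k: "\<forall>e. e \<notin> E \<longrightarrow> k e = (0::int)" and x: "x = s \<mu> (B k)"
    using basis_ex[OF E] unfolding B_def by blast
  have "unit_element s (dim_of s x) (B k)"
    unfolding unit_element_def
  proof (intro conjI ballI allI impI)
    have "s 1 x = s \<mu> (B k)" using x scal(1)[OF sm] by simp
    then show "B k \<in> dim_of s x" unfolding dim_of_def qsim_def by blast
  next
    fix y assume "y \<in> dim_of s x"
    then obtain \<alpha> \<beta> where ab: "s \<alpha> x = s \<beta> y" unfolding dim_of_def qsim_def by blast
    obtain \<nu> k' where k': "\<forall>e. e \<notin> E \<longrightarrow> k' e = (0::int)" and y: "y = s \<nu> (B k')"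
      using basis_ex[OF E] unfolding B_def by blast
    have "s (\<alpha>*\<mu>) (B k) = s (\<beta>*\<nu>) (B k')" using ab x y scal(2)[OF sm] by simp
    then have "k = k'" using basis_uniq[OF E k k'] unfolding B_def by blast
    then show "\<exists>m. y = s m (B k)" using y by blast
  next
    fix m m' assume "s m (B k) = s m' (B k)"
    then show "m = m'" using basis_uniq[OF E k k] unfolding B_def by blast
  qed
  then show ?thesis by blast
qed

lemma qsum_rep:
  assumes "quantity_space s" and "x = s a w" and "y = s c w"
  shows "qsum s x y = s (a + c) w"
proof -
  have sm: "scalable_monoid s" using assms unfolding quantity_space_def by blast
  define u where "u = (SOME u. unit_element s (dim_of s x) u)"
  have U: "unit_element s (dim_of s x) u" unfolding u_def
    using unit_ex[OF assms(1)] by (rule someI_ex)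
  have "s 1 x = s a w" using assms(2) scal(1)[OF sm] by simp
  then have "w \<in> dim_of s x" unfolding dim_of_def qsim_def by blast
  then obtain m where m: "w = s m u" using U unfolding unit_element_def by blast
  have inj: "\<And>p q. s p u = s q u \<Longrightarrow> p = q" using U unfolding unit_element_def by blast
  have x: "x = s (a*m) u" using assms(2) m scal(2)[OF sm] by simp
  have y: "y = s (c*m) u" using assms(3) m scal(2)[OF sm] by simp
  have t1: "(THE \<rho>. x = s \<rho> u) = a*m" using x inj by (intro the_equality) auto
  have t2: "(THE \<rho>. y = s \<rho> u) = c*m" using y inj by (intro the_equality) auto
  have "qsum s x y = s (a*m + c*m) u" unfolding qsum_def Let_def u_def[symmetric] t1 t2 ..
  also have "\<dots> = s ((a+c)*m) u" by (simp add: distrib_right)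
  also have "\<dots> = s (a+c) w" using m scal(2)[OF sm] by simp
  finally show ?thesis .
qed

theorem proposition3p11:
  fixes s :: "'k::field \<Rightarrow> 'q::comm_monoid_mult \<Rightarrow> 'q"
  assumes "quantity_space s"
    and "A \<in> dims s" and "B \<in> dims s"
    and "x \<in> A" and "y \<in> A" and "z \<in> B"
  shows "qsum s x y * z = qsum s (x * z) (y * z) \<and> z * qsum s x y = qsum s (z * x) (z * y)"
proof -
  have sm: "scalable_monoid s" using assms unfolding quantity_space_def by blast
  obtain a where A: "A = {(x, y). qsim s x y} `` {a}"
    using assms(2) unfolding dims_def by (rule quotientE)
  have xa: "x \<in> dim_of s a" "y \<in> dim_of s a" using assms(4,5) A unfolding dim_of_def by auto
  obtain u where U: "unit_element s (dim_of s a) u" using unit_ex[OF assms(1)] by blast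
  obtain p q where x: "x = s p u" and y: "y = s q u" using U xa unfolding unit_element_def by blast
  have 1: "qsum s x y = s (p+q) u" by (rule qsum_rep[OF assms(1) x y])
  have "x * z = s p (u*z)" "y * z = s q (u*z)" using x y scal(3)[OF sm] by simp_all
  then have 2: "qsum s (x*z) (y*z) = s (p+q) (u*z)" by (intro qsum_rep[OF assms(1)])
  have "z * x = s p (z*u)" "z * y = s q (z*u)" using x y scal(4)[OF sm] by simp_all
  then have 3: "qsum s (z*x) (z*y) = s (p+q) (z*u)" by (intro qsum_rep[OF assms(1)])
  show ?thesis unfolding 1 2 3 using scal(3,4)[OF sm] by simp
qed

end
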